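(* Let $R$ be the holistic system robustness random variable (defined in the context), with distribution $\pi_R$, so that $\mathbb{P}_{\pi_R}[-R\le a]=1$. Let $\epsilon\in(0,1)$, $\gamma\in[0,1)$, $\alpha\in(0,1]$, and define \[ L(x,\mu,t)=t\left(\mu+e^{\frac{x}{t}-\mu-\ln(\alpha)-1}\right),\qquad u_b(\mu,t)=L(a,\mu,t). \] Let $r_1,\dots,r_N$ be independent samples of $R$ with $N\ge\frac{\log(1-\gamma)}{\log(1-\epsilon)}$, and $\zeta^*_N(\mu,t)=\max_{1\le k\le N}L(-r_k,\mu,t)$. Then \[ \mathbb{P}^N_{\pi_R}\left[r^*_E\triangleq\inf_{\mu\in\mathbb{R},\ t>0}\zeta^*_N(\mu,t)(1-\epsilon)+u_b(\mu,t)\epsilon\ \ge\ \mathrm{EVaR}_\alpha(-R)\right]\ge\gamma. \]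
   Context: System setting: $\dot x = f(x,u)+\xi$, $x\in\mathcal{X}\subset\mathbb{R}^n$, $u=U(x,\theta)\in\mathcal{U}\subset\mathbb{R}^m$, $\theta\in\Theta\subset\mathbb{R}^p$ a parameter fixed along a trajectory, and $\xi$ stochastic noise with unknown distribution $\pi_\xi(x,u,t)$. $x^\theta$ denotes the resulting closed-loop state signal in $\mathcal{S}=\{s:\mathbb{R}_{\ge0}\to\mathbb{R}^n\}$ from an initial condition $x_0\in\mathcal{X}_0\subseteq\mathcal{X}$. A robustness metric is a function $\rho:\mathcal{S}\to[-a,b]$ with $a,b>0$ such that $\rho(s)\ge0$ only for signals exhibiting desired properties. The holistic system robustness $R$ is the scalar random variable whose samples are $r=\rho(x^\theta)$, where $(x_0,\theta)$ is sampled uniformly from $\mathcal{X}_0\times\Theta$. $\mathrm{EVaR}_\alpha(Z)=\inf_{z>0}\frac1z\ln\left(\frac{\mathbb{E}[e^{zZ}]}{\alpha}\right)$. $\zeta^*_N(\mu,t)$ is the solution of $\min_\zeta\zeta$ s.t. $\zeta\ge L(-r_i,\mu,t)$ for all $i$; $\mathbb{P}^N_{\pi_R}$ is the $N$-fold product measure of the i.i.d. sample. *)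

theory Defs
  imports "HOL-Probability.Probability"
begin

definition Lfun :: "real \<Rightarrow> real \<Rightarrow> real \<Rightarrow> real \<Rightarrow> real" where
  "Lfun \<alpha> x \<mu> t = t * (\<mu> + exp (x / t - \<mu> - ln \<alpha> - 1))"

definition EVaR :: "'a measure \<Rightarrow> real \<Rightarrow> ('a \<Rightarrow> real) \<Rightarrow> real" where
  "EVaR M \<alpha> Z = (INF z\<in>{0<..}. (1 / z) * ln ((\<integral>\<omega>. exp (z * Z \<omega>) \<partial>M) / \<alpha>))"

definition zeta_star :: "real \<Rightarrow> nat \<Rightarrow> (nat \<Rightarrow> real) \<Rightarrow> real \<Rightarrow> real \<Rightarrow> real" where
  "zeta_star \<alpha> N r \<mu> t = Max ((\<lambda>k. Lfun \<alpha> (- r k) \<mu> t) ` {..<N})"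

definition rE_star :: "real \<Rightarrow> real \<Rightarrow> real \<Rightarrow> nat \<Rightarrow> (nat \<Rightarrow> real) \<Rightarrow> real" where
  "rE_star \<alpha> a \<epsilon> N r =
     (INF p\<in>UNIV \<times> {0<..}. zeta_star \<alpha> N r (fst p) (snd p) * (1 - \<epsilon>) + Lfun \<alpha> a (fst p) (snd p) * \<epsilon>)"

end

theory Submission imports Defs begin

lemma (in real_distribution) quantile_exists:
  assumes "0 < e" "e < 1"
  shows "\<exists>c. measure M {..<c} \<le> e \<and> measure M {..c} \<ge> e"
proof -
  define S where "S = {x. cdf M x \<ge> e}"
  have "eventually (\<lambda>x. cdf M x > e) at_top"
    using cdf_lim_at_top_prob assms(2) by (rule order_tendstoD)
  then obtain x1 where x1: "cdf M x1 > e" by (metis eventually_at_top_linorder order_refl)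
  have "eventually (\<lambda>x. cdf M x < e) at_bot"
    using cdf_lim_at_bot assms(1) by (rule order_tendstoD)
  then obtain x0 where x0: "cdf M x0 < e" by (metis eventually_at_bot_linorder order_refl)
  have ne: "S \<noteq> {}" using x1 S_def less_imp_le by auto
  have bdd: "bdd_below S"
  proof
    fix x assume "x \<in> S"
    then show "x0 \<le> x" using x0 cdf_nondecreasing[of x x0] S_def by (cases "x \<le> x0") auto
  qed
  define c where "c = Inf S"
  have "e \<le> cdf M c"
  proof (rule tendsto_lowerbound)
    show "(cdf M \<longlongrightarrow> cdf M c) (at_right c)"
      using cdf_is_right_cont by (simp add: continuous_within)
    show "\<forall>\<^sub>F x in at_right c. e \<le> cdf M x"
      using eventually_at_right_less
    proof (rule eventually_mono)
      fix x assume "c < x"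
      then obtain y where "y \<in> S" "y < x" using cInf_less_iff[OF ne bdd] c_def by auto
      then show "e \<le> cdf M x" using cdf_nondecreasing[of y x] S_def by auto
    qed
    show "at_right c \<noteq> bot" by simp
  qed
  moreover have cm: "c - 1 < c" by simp
  moreover have "measure M {..<c} \<le> e"
  proof (rule tendsto_upperbound)
    show "(cdf M \<longlongrightarrow> measure M {..<c}) (at_left c)" by (rule cdf_at_left)
    show "\<forall>\<^sub>F x in at_left c. cdf M x \<le> e"
      using eventually_at_left_real[of "c - 1" c, OF cm]
    proof (rule eventually_mono)
      fix x assume "x \<in> {c - 1<..<c}"
      then have "x < c" by simp
      then have "x \<notin> S" using cInf_lower[OF _ bdd] c_def by force
      then show "cdf M x \<le> e" using S_def by auto
    qed
    show "at_left c \<noteq> bot" by simp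
  qed
  ultimately show ?thesis by (auto simp: cdf_def)
qed

lemma (in real_distribution) evar_bound:
  assumes AE: "AE x in M. -a \<le> x \<and> x \<le> b"
    and al: "0 < \<alpha>" "\<alpha> \<le> 1" and t: "t > 0"
    and c: "measure M {..<c} \<le> e" and e: "0 \<le> e" "e \<le> 1"
    and W: "W \<ge> exp (-c/t)"
  shows "EVaR M \<alpha> (\<lambda>x. -x) \<le> t * (\<mu> + exp (-\<mu> - ln \<alpha> - 1) * (W * (1 - e) + exp (a/t) * e))"
proof -
  have P1: "prob UNIV = 1" using prob_space by simp
  have intg: "integrable M (\<lambda>x. exp (z * - x))" if "z > 0" for z
  proof (rule integrable_const_bound[where B="exp (z * a)"])
    show "AE x in M. norm (exp (z * - x)) \<le> exp (z * a)"
      using AE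
    proof eventually_elim
      fix x assume "-a \<le> x \<and> x \<le> b"
      then have "z * (-x) \<le> z * a" using that by (intro mult_left_mono) auto
      then show "norm (exp (z * - x)) \<le> exp (z * a)" by simp
    qed
  qed simp
  have Ilow: "exp (-(z*b)) \<le> (\<integral>x. exp (z * - x) \<partial>M)" if z: "z > 0" for z
  proof -
    have "(\<integral>x. exp (z * - b) \<partial>M) \<le> (\<integral>x. exp (z * - x) \<partial>M)"
      by (rule integral_mono_AE) (use intg[OF z] AE z in \<open>auto elim!: eventually_mono\<close>)
    then show ?thesis by (simp add: P1)
  qed
  have Ipos: "(\<integral>x. exp (z * - x) \<partial>M) > 0" if "z > 0" for z
    using Ilow[OF that] by (meson exp_gt_zero less_le_trans)
  have lowb: "(1/z) * ln ((\<integral>x. exp (z * - x) \<partial>M) / \<alpha>) \<ge> -b" if z: "z > 0" for z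
  proof -
    have "exp (-(z*b)) \<le> (\<integral>x. exp (z * - x) \<partial>M)" by (rule Ilow[OF z])
    also have "\<dots> \<le> (\<integral>x. exp (z * - x) \<partial>M) / \<alpha>"
      using Ipos[OF z] al by (simp add: le_divide_eq)
    finally have "-(z*b) \<le> ln ((\<integral>x. exp (z * - x) \<partial>M) / \<alpha>)"
      using Ipos[OF z] al by (subst ln_ge_iff) auto
    then show ?thesis using z by (simp add: field_simps)
  qed
  define I where "I = (\<integral>x. exp ((1/t) * - x) \<partial>M)"
  have I0: "I > 0" unfolding I_def using Ipos[of "1/t"] t by simp
  have "EVaR M \<alpha> (\<lambda>x. -x) \<le> (1/(1/t)) * ln (I / \<alpha>)"
    unfolding EVaR_def I_def
    by (rule cINF_lower) (use t lowb in \<open>auto intro!: bdd_belowI[where m="-b"]\<close>)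
  also have "\<dots> = t * ln (I / \<alpha>)" by simp
  also have "\<dots> \<le> t * (\<mu> + exp (-\<mu> - ln \<alpha> - 1) * I)"
  proof -
    define K where "K = exp (-\<mu> - ln \<alpha> - 1)"
    have K: "K = exp (-\<mu> - 1) / \<alpha>" using al
      by (simp add: K_def exp_diff exp_minus exp_add field_simps)
    have "ln (I / \<alpha>) = \<mu> + 1 + ln (K * I)"
      using al I0 by (simp add: K ln_mult ln_div)
    also have "\<dots> \<le> \<mu> + 1 + (K * I - 1)"
      using I0 by (intro add_left_mono ln_le_minus_one) (simp add: K_def)
    finally show ?thesis using t by (simp add: K_def)
  qed
  also have "\<dots> \<le> t * (\<mu> + exp (-\<mu> - ln \<alpha> - 1) * (W * (1 - e) + exp (a/t) * e))"
  proof -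
    have "I \<le> W * (1 - e) + exp (a/t) * e"
    proof (cases "W \<ge> exp (a/t)")
      case True
      have "I \<le> (\<integral>x. exp (a/t) \<partial>M)" unfolding I_def
      proof (rule integral_mono_AE)
        show "integrable M (\<lambda>x. exp (1/t * - x))" using intg[of "1/t"] t by simp
        show "integrable M (\<lambda>x. exp (a/t))" by simp
        show "AE x in M. exp (1/t * -x) \<le> exp (a/t)" using AE
        proof eventually_elim
          fix x assume "-a \<le> x \<and> x \<le> b"
          then have "-x/t \<le> a/t" using t by (intro divide_right_mono) auto
          then show "exp (1/t * -x) \<le> exp (a/t)" by simp
        qed
      qed
      also have "\<dots> = exp (a/t)" by (simp add: P1)
      also have "\<dots> \<le> W * (1 - e) + exp (a/t) * e" using True e
      proof -
        have "exp (a/t) * (1 - e) \<le> W * (1 - e)" using True e by (intro mult_right_mono) auto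
        then show ?thesis by (simp add: algebra_simps)
      qed
      finally show ?thesis .
    next
      case False
      define D where "D = exp (a/t) - W"
      have D: "D > 0" using False D_def by simp
      have "I \<le> (\<integral>x. W + D * indicator {..<c} x \<partial>M)" unfolding I_def
      proof (rule integral_mono_AE)
        show "integrable M (\<lambda>x. exp (1 / t * - x))" using intg[of "1/t"] t by simp
        show "integrable M (\<lambda>x. W + D * indicator {..<c} x)"
          by (intro Bochner_Integration.integrable_add integrable_mult_right integrable_real_indicator) (auto simp: emeasure_finite less_top[symmetric])
        show "AE x in M. exp (1 / t * - x) \<le> W + D * indicator {..<c} x"
          using AE
        proof eventually_elim
          fix x assume x: "-a \<le> x \<and> x \<le> b"
          show "exp (1 / t * - x) \<le> W + D * indicator {..<c} x"
          proof (cases "x < c")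
            case True
            have "-x/t \<le> a/t" using x t by (intro divide_right_mono) auto
            then have "exp (1 / t * - x) \<le> exp (a/t)" by simp
            then show ?thesis using True D_def by simp
          next
            case False
            have "-x/t \<le> -c/t" using False t by (intro divide_right_mono) auto
            then have "exp (1 / t * - x) \<le> exp (-c/t)" by simp
            then have "exp (1 / t * - x) \<le> W" using W by linarith
            then show ?thesis using False by simp
          qed
        qed
      qed
      also have "\<dots> = W + D * measure M {..<c}"
      proof -
        have ind: "integrable M (indicat_real {..<c})"
          by (intro integrable_real_indicator) (auto simp: emeasure_finite less_top[symmetric])
        have ii: "integrable M (\<lambda>x. D * indicator {..<c} x :: real)"
          by (intro integrable_mult_right integrable_real_indicator) (auto simp: emeasure_finite less_top[symmetric])
        have "(\<integral>x. W + D * indicator {..<c} x \<partial>M) = (\<integral>x. W \<partial>M) + (\<integral>x. D * indicator {..<c} x \<partial>M)"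
          by (rule Bochner_Integration.integral_add[OF _ ii]) simp
        also have "(\<integral>x. D * indicator {..<c} x \<partial>M) = D * (\<integral>x. indicator {..<c} x \<partial>M)"
          using ind by simp
        finally show ?thesis by (simp add: P1)
      qed
      also have "\<dots> \<le> W + D * e" using D c by simp
      also have "\<dots> = W * (1 - e) + exp (a/t) * e" by (simp add: D_def algebra_simps)
      finally show ?thesis .
    qed
    then show ?thesis using t by (intro mult_left_mono add_left_mono) auto
  qed
  finally show ?thesis .
qed


theorem corollary8:
  fixes \<pi>R :: "real measure" and a b \<epsilon> \<gamma> \<alpha> :: real and N :: nat
  assumes "prob_space \<pi>R"
    and "sets \<pi>R = sets borel"
    and "a > 0" and "b > 0"
    and "AE r in \<pi>R. - a \<le> r \<and> r \<le> b"
    and "0 < \<epsilon>" and "\<epsilon> < 1"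
    and "0 \<le> \<gamma>" and "\<gamma> < 1"
    and "0 < \<alpha>" and "\<alpha> \<le> 1"
    and "real N \<ge> ln (1 - \<gamma>) / ln (1 - \<epsilon>)"
  shows "\<exists>A \<in> sets (PiM {..<N} (\<lambda>_. \<pi>R)).
           A \<subseteq> {r \<in> space (PiM {..<N} (\<lambda>_. \<pi>R)).
                   rE_star \<alpha> a \<epsilon> N r \<ge> EVaR \<pi>R \<alpha> (\<lambda>x. - x)}
         \<and> measure (PiM {..<N} (\<lambda>_. \<pi>R)) A \<ge> \<gamma>"
proof -
  interpret R: real_distribution \<pi>R
    by (simp add: real_distribution_def real_distribution_axioms_def assms(1,2))
  define P where "P = PiM {..<N} (\<lambda>_. \<pi>R)"
  have lneps: "ln (1 - \<epsilon>) < 0" using assms(6,7) by simp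
  have Nln: "real N * ln (1 - \<epsilon>) \<le> ln (1 - \<gamma>)"
    using assms(12) lneps by (simp add: divide_le_eq)
  show ?thesis
  proof (cases "N = 0")
    case True
    then have "ln (1 - \<gamma>) \<ge> 0" using Nln by simp
    then have "\<gamma> \<le> 0" using assms(9) by simp
    then show ?thesis by (intro bexI[of _ "{}"]) auto
  next
    case False
    obtain c where c1: "measure \<pi>R {..<c} \<le> \<epsilon>" and c2: "\<epsilon> \<le> measure \<pi>R {..c}"
      using R.quantile_exists assms(6,7) by blast
    define B where "B = PiE {..<N} (\<lambda>_. {c<..})"
    have B: "B \<in> sets P" unfolding B_def P_def
      by (intro sets_PiM_I_finite) auto
    define A where "A = space P - B"
    have A: "A \<in> sets P" unfolding A_def using B by auto
    interpret PP: product_prob_space "\<lambda>_::nat. \<pi>R" "{..<N}"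
      by unfold_locales
    have mB: "measure P B = measure \<pi>R {c<..} ^ N"
    proof -
      have "emeasure P B = (\<Prod>i\<in>{..<N}. emeasure \<pi>R {c<..})"
        unfolding P_def B_def by (rule PP.emeasure_PiM) auto
      also have "\<dots> = ennreal (measure \<pi>R {c<..} ^ N)"
        by (simp add: R.emeasure_eq_measure ennreal_power)
      finally show ?thesis by (simp add: measure_def)
    qed
    have m: "measure \<pi>R {c<..} \<le> 1 - \<epsilon>"
    proof -
      have "measure \<pi>R {c<..} = 1 - measure \<pi>R {..c}"
        using R.prob_compl[of "{..c}"] by (simp add: Compl_eq_Diff_UNIV[symmetric] not_le)
      then show ?thesis using c2 by simp
    qed
    have pow: "(1 - \<epsilon>) ^ N \<le> 1 - \<gamma>"
    proof -
      have "(1 - \<epsilon>) ^ N = exp (real N * ln (1 - \<epsilon>))"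
        using assms(7) by (simp add: exp_of_nat_mult)
      also have "\<dots> \<le> exp (ln (1 - \<gamma>))" using Nln by simp
      also have "\<dots> = 1 - \<gamma>" using assms(9) by simp
      finally show ?thesis .
    qed
    have mA: "measure P A \<ge> \<gamma>"
    proof -
      have "measure P A = 1 - measure P B" unfolding A_def P_def
        by (rule PP.prob_compl) (use B P_def in simp)
      moreover have "measure \<pi>R {c<..} ^ N \<le> (1 - \<epsilon>) ^ N"
        using m by (intro power_mono) auto
      ultimately show ?thesis using mB pow by simp
    qed
    have sub: "A \<subseteq> {r \<in> space P. rE_star \<alpha> a \<epsilon> N r \<ge> EVaR \<pi>R \<alpha> (\<lambda>x. - x)}"
    proof
      fix r assume rA: "r \<in> A"
      then have rsp: "r \<in> space P" unfolding A_def by simp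
      obtain k where k: "k < N" "r k \<le> c"
      proof -
        have "r \<notin> B" using rA A_def by simp
        moreover have "r \<in> extensional {..<N}"
          using rsp unfolding P_def by (simp add: space_PiM PiE_def)
        ultimately show ?thesis using that unfolding B_def by (force simp: PiE_def not_less)
      qed
      have "EVaR \<pi>R \<alpha> (\<lambda>x. - x) \<le> rE_star \<alpha> a \<epsilon> N r"
        unfolding rE_star_def
      proof (rule cINF_greatest)
        show "UNIV \<times> {0::real<..} \<noteq> {}" by auto
        fix p :: "real \<times> real" assume "p \<in> UNIV \<times> {0<..}"
        then obtain \<mu> t where p: "p = (\<mu>, t)" and t: "t > 0" by (cases p) auto
        define K where "K = exp (- \<mu> - ln \<alpha> - 1)"
        have K0: "K > 0" by (simp add: K_def)
        have Lf: "Lfun \<alpha> x \<mu> t = t * (\<mu> + K * exp (x / t))" for x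
          by (simp add: Lfun_def K_def exp_diff exp_add exp_minus field_simps)
        define \<zeta> where "\<zeta> = zeta_star \<alpha> N r \<mu> t"
        have "\<zeta> \<ge> Lfun \<alpha> (- r k) \<mu> t"
          unfolding \<zeta>_def zeta_star_def using k by (intro Max_ge) auto
        define W where "W = (\<zeta> / t - \<mu>) / K"
        have zW: "\<zeta> = t * (\<mu> + K * W)" using t K0 by (simp add: W_def field_simps)
        have "K * exp (- r k / t) \<le> K * W"
          using \<open>\<zeta> \<ge> _\<close> t unfolding Lf zW by simp
        then have "exp (- r k / t) \<le> W" using K0 by simp
        moreover have "exp (- c / t) \<le> exp (- r k / t)"
          using k t by (simp add: divide_right_mono)
        ultimately have W: "exp (- c / t) \<le> W" by linarith
        have "EVaR \<pi>R \<alpha> (\<lambda>x. - x) \<le> t * (\<mu> + K * (W * (1 - \<epsilon>) + exp (a/t) * \<epsilon>))"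
          unfolding K_def
          by (rule R.evar_bound[OF assms(5) assms(10,11) t c1 _ _ W]) (use assms(6,7) in auto)
        also have "\<dots> = \<zeta> * (1 - \<epsilon>) + Lfun \<alpha> a \<mu> t * \<epsilon>"
          unfolding zW Lf by (simp add: algebra_simps)
        finally show "EVaR \<pi>R \<alpha> (\<lambda>x. - x) \<le> zeta_star \<alpha> N r (fst p) (snd p) * (1 - \<epsilon>) + Lfun \<alpha> a (fst p) (snd p) * \<epsilon>"
          using p \<zeta>_def by simp
      qed
      then show "r \<in> {r \<in> space P. rE_star \<alpha> a \<epsilon> N r \<ge> EVaR \<pi>R \<alpha> (\<lambda>x. - x)}"
        using rsp by simp
    qed
    show ?thesis using A sub mA unfolding P_def by blast
  qed
qed

end
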